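(* Consider the networked $SIRS$-$V_o$ system without media actuator described in the context, with initial condition at time $t_0$ satisfying $o_i(t_0),s_i(t_0),x_i(t_0),r_i(t_0),v_i(t_0)\in[0,1]$ and $s_i(t_0)+x_i(t_0)+r_i(t_0)+v_i(t_0)=1$ for all $i$. If $o(t_0)\in[0,1]^n$, then $o_i(t)\in[0,1]$ for all $i\in[n]$ and all $t>t_0$.
   Context: There are $n$ nodes. All parameters are real and nonnegative: $a_{ij},\beta_{ij},\gamma_i,\omega_i,\delta_i,\eta^{\min}_{ij},\Delta\eta_{ij}$. Let $A=[a_{ij}]$, $B=[\beta_{ij}]$, $H_{\min}=[\eta^{\min}_{ij}]$, $\Delta H=[\Delta\eta_{ij}]$. For a square matrix $M$, $k_i[M]=\sum_j M_{ij}$, $\widetilde K[M]=\mathrm{diag}(k_i[M])$, $L[M]=\widetilde K[M]-M$. Let $\widetilde G=\mathrm{diag}(\gamma_i)$, $\widetilde W=\mathrm{diag}(\omega_i)$, $\widetilde D=\mathrm{diag}(\delta_i)$, $H(o)=\mathrm{diag}(o)\Delta H+H_{\min}$. State $(o,s,x,r,v)\in(\mathbb{R}^n)^5$, $\widetilde S=\mathrm{diag}(s)$, $\widetilde R=\mathrm{diag}(r)$, dynamics $\dot o=A(x-o)-2L[A]o$, $\dot s=\widetilde Dv-\widetilde S(Bx+H(o)v)+\widetilde Wr$, $\dot x=\widetilde SBx-\widetilde Gx$, $\dot r=\widetilde Gx-\widetilde Wr-\widetilde RH(o)v$, $\dot v=(\widetilde S+\widetilde R)H(o)v-\widetilde Dv$.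 *)

theory Defs
  imports "HOL-Analysis.Analysis"
begin

definition diagm :: "real ^ 'n \<Rightarrow> real ^ 'n ^ 'n" where
  "diagm d = (\<chi> i j. if i = j then d $ i else 0)"

definition kvec :: "real ^ 'n ^ 'n \<Rightarrow> real ^ 'n" where
  "kvec M = (\<chi> i. \<Sum>j\<in>UNIV. M $ i $ j)"

definition Ktil :: "real ^ 'n ^ 'n \<Rightarrow> real ^ 'n ^ 'n" where
  "Ktil M = diagm (kvec M)"

definition Lap :: "real ^ 'n ^ 'n \<Rightarrow> real ^ 'n ^ 'n" where
  "Lap M = Ktil M - M"

definition Hmat :: "real ^ 'n ^ 'n \<Rightarrow> real ^ 'n ^ 'n \<Rightarrow> real ^ 'n \<Rightarrow> real ^ 'n ^ 'n" where
  "Hmat Hmin DH o' = diagm o' ** DH + Hmin"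

definition f_o :: "real ^ 'n ^ 'n \<Rightarrow> real ^ 'n \<Rightarrow> real ^ 'n \<Rightarrow> real ^ 'n" where
  "f_o A o' x = A *v (x - o') - 2 *\<^sub>R (Lap A *v o')"

definition f_s where
  "f_s B \<delta> \<omega> Hmin DH o' s x r v =
     diagm \<delta> *v v - diagm s *v (B *v x + Hmat Hmin DH o' *v v) + diagm \<omega> *v r"

definition f_x where
  "f_x B \<gamma> s x = diagm s ** B *v x - diagm \<gamma> *v x"

definition f_r where
  "f_r \<gamma> \<omega> Hmin DH o' x r v =
     diagm \<gamma> *v x - diagm \<omega> *v r - diagm r ** Hmat Hmin DH o' *v v"

definition f_v where
  "f_v \<delta> Hmin DH o' s r v = (diagm s + diagm r) ** Hmat Hmin DH o' *v v - diagm \<delta> *v v"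

end

theory Submission
  imports Defs
begin

lemma comp_deriv:
  fixes f :: "real \<Rightarrow> real ^ 'n"
  assumes "(f has_vector_derivative D) (at t within S)"
  shows "((\<lambda>t. f t $ i) has_real_derivative D $ i) (at t within S)"
  using bounded_linear.has_vector_derivative[OF bounded_linear_vec_nth assms, of i]
  by (simp add: has_real_derivative_iff_has_vector_derivative)

lemma mv_comp: "(M *v w) $ i = (\<Sum>j\<in>UNIV. M $ i $ j * w $ j)"
  by (simp add: matrix_vector_mult_def)

lemma diagm_mv: "(diagm d *v w) $ i = d $ i * w $ i"
proof -
  have "(diagm d *v w) $ i = (\<Sum>j\<in>UNIV. (if i = j then d $ i * w $ j else 0))"
    unfolding diagm_def matrix_vector_mult_def by (simp only: vec_lambda_beta, rule sum.cong) auto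
  also have "\<dots> = d $ i * w $ i" by (simp add: sum.delta)
  finally show ?thesis .
qed

lemma diagm_mm_mv: "(diagm d ** M *v w) $ i = d $ i * (M *v w) $ i"
  by (simp add: matrix_vector_mul_assoc[symmetric] diagm_mv)

lemma diagm_add: "diagm a + diagm b = diagm (a + b)"
  by (simp add: diagm_def vec_eq_iff)

lemma Hmat_comp: "Hmat Hmin DH o' $ i $ j = o' $ i * DH $ i $ j + Hmin $ i $ j"
proof -
  have "(diagm o' ** DH) $ i $ j = (\<Sum>k\<in>UNIV. (if i = k then o' $ i * DH $ k $ j else 0))"
    unfolding diagm_def matrix_matrix_mult_def by (simp only: vec_lambda_beta, rule sum.cong) auto
  also have "\<dots> = o' $ i * DH $ i $ j" by (simp add: sum.delta)
  finally show ?thesis by (simp add: Hmat_def)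
qed

lemma fo_comp: "f_o A Ov Xv $ i = (A *v Xv) $ i + (A *v Ov) $ i - 2 * (\<Sum>j\<in>UNIV. A $ i $ j) * Ov $ i"
  by (simp add: f_o_def Lap_def Ktil_def kvec_def matrix_vector_mult_diff_rdistrib
      matrix_vector_mult_diff_distrib diagm_mv)

lemma fs_comp: "f_s B \<delta> \<omega> Hmin DH Ov Sv Xv Rv Vv $ i =
   \<delta> $ i * Vv $ i - Sv $ i * ((B *v Xv) $ i + (Hmat Hmin DH Ov *v Vv) $ i) + \<omega> $ i * Rv $ i"
  by (simp add: f_s_def diagm_mv)

lemma fx_comp: "f_x B \<gamma> Sv Xv $ i = Sv $ i * (B *v Xv) $ i - \<gamma> $ i * Xv $ i"
  by (simp add: f_x_def diagm_mv diagm_mm_mv)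

lemma fr_comp: "f_r \<gamma> \<omega> Hmin DH Ov Xv Rv Vv $ i =
   \<gamma> $ i * Xv $ i - \<omega> $ i * Rv $ i - Rv $ i * (Hmat Hmin DH Ov *v Vv) $ i"
  by (simp add: f_r_def diagm_mv diagm_mm_mv)

lemma fv_comp: "f_v \<delta> Hmin DH Ov Sv Rv Vv $ i =
   (Sv $ i + Rv $ i) * (Hmat Hmin DH Ov *v Vv) $ i - \<delta> $ i * Vv $ i"
  by (simp add: f_v_def diagm_mv diagm_mm_mv diagm_add)


lemma prod_lb:
  fixes a b c1 c2 d M1 M2 :: real
  assumes "a \<ge> - c1 * d" "b \<ge> - c2 * d" "\<bar>a\<bar> \<le> M1" "\<bar>b\<bar> \<le> M2" "c1 \<ge> 0" "c2 \<ge> 0" "d \<ge> 0"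
  shows "a * b \<ge> - (M1 * c2 + M2 * c1) * d"
proof -
  have c2d: "c2 * d \<ge> 0" "c1 * d \<ge> 0" using assms by simp_all
  have M: "M1 \<ge> 0" "M2 \<ge> 0" using assms(3,4) by linarith+
  have "M1 * (c2 * d) \<ge> 0" "M2 * (c1 * d) \<ge> 0" using M c2d by simp_all
  show ?thesis
  proof (cases "a \<ge> 0")
    case True
    show ?thesis
    proof (cases "b \<ge> 0")
      case True then show ?thesis using \<open>a\<ge>0\<close> \<open>M1 * (c2 * d) \<ge> 0\<close> \<open>M2 * (c1 * d) \<ge> 0\<close>
        by (simp add: algebra_simps) (smt (verit) mult_nonneg_nonneg)
    next
      case False
      have "a * b \<ge> a * (- (c2 * d))" using True assms(2) by (intro mult_left_mono) auto
      moreover have "a * (c2 * d) \<le> M1 * (c2 * d)"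
        using assms True c2d by (intro mult_right_mono) auto
      ultimately show ?thesis using \<open>M2 * (c1 * d) \<ge> 0\<close> by (simp add: algebra_simps)
    qed
  next
    case False
    show ?thesis
    proof (cases "b \<ge> 0")
      case True
      have "a * b \<ge> (- (c1 * d)) * b" using True assms(1) by (intro mult_right_mono) auto
      moreover have "(c1 * d) * b \<le> (c1 * d) * M2"
        using assms True c2d by (intro mult_left_mono) auto
      ultimately show ?thesis using \<open>M1 * (c2 * d) \<ge> 0\<close> by (simp add: algebra_simps)
    next
      case False
      then have "a * b \<ge> 0" using \<open>\<not> a\<ge>0\<close> by (simp add: mult_nonpos_nonpos)
      then show ?thesis using \<open>M1 * (c2 * d) \<ge> 0\<close> \<open>M2 * (c1 * d) \<ge> 0\<close> by (simp add: algebra_simps)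
    qed
  qed
qed


lemma cleft:
  fixes f :: "real \<Rightarrow> real"
  assumes "continuous_on {t0..T} f" "t0 < t1" "t1 \<le> T" "\<forall>t\<in>{t0..<t1}. f t > 0"
  shows "f t1 \<ge> 0"
proof -
  have "(f \<longlongrightarrow> f t1) (at t1 within {t0..T})"
    using assms(1-3) by (simp add: continuous_on_def)
  then have "(f \<longlongrightarrow> f t1) (at t1 within {t0..t1})"
    by (rule tendsto_within_subset) (use assms in auto)
  then have lim: "(f \<longlongrightarrow> f t1) (at_left t1)"
    using assms(2) by (simp add: at_within_Icc_at_left)
  have "eventually (\<lambda>t. t \<in> {t0<..<t1}) (at_left t1)"
    using assms(2) by (rule eventually_at_left_real)
  then have "eventually (\<lambda>t. 0 \<le> f t) (at_left t1)"
    by eventually_elim (use assms(4) in \<open>auto intro: less_imp_le\<close>)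
  from tendsto_lowerbound[OF lim this] show ?thesis by simp
qed

lemma dleft:
  fixes f :: "real \<Rightarrow> real"
  assumes "(f has_real_derivative D) (at t1 within {t0..T})" "t0 < t1" "t1 \<le> T"
    "f t1 = 0" "\<forall>t\<in>{t0..<t1}. f t > 0"
  shows "D \<le> 0"
proof -
  have "((\<lambda>y. (f y - f t1) / (y - t1)) \<longlongrightarrow> D) (at t1 within {t0..T})"
    using assms(1) by (simp add: has_field_derivative_iff)
  then have "((\<lambda>y. (f y - f t1) / (y - t1)) \<longlongrightarrow> D) (at t1 within {t0..t1})"
    by (rule tendsto_within_subset) (use assms in auto)
  then have lim: "((\<lambda>y. (f y - f t1) / (y - t1)) \<longlongrightarrow> D) (at_left t1)"
    using assms(2) by (simp add: at_within_Icc_at_left)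
  have "eventually (\<lambda>t. t \<in> {t0<..<t1}) (at_left t1)"
    using assms(2) by (rule eventually_at_left_real)
  then have "eventually (\<lambda>y. (f y - f t1) / (y - t1) \<le> 0) (at_left t1)"
  proof eventually_elim
    case (elim y)
    then have "f y > 0" "y - t1 < 0" using assms(5) by auto
    then show ?case using assms(4) by (simp add: divide_pos_neg less_imp_le)
  qed
  from tendsto_upperbound[OF lim this] show ?thesis by simp
qed

lemma barrier:
  fixes g :: "'p \<Rightarrow> real \<Rightarrow> real"
  assumes fin: "finite P"
    and cont: "\<forall>p\<in>P. continuous_on {t0..T} (g p)"
    and der: "\<forall>p\<in>P. \<forall>t\<in>{t0..T}. (g p has_real_derivative g' p t) (at t within {t0..T})"
    and init: "\<forall>p\<in>P. g p t0 > 0"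
    and key: "\<forall>t\<in>{t0<..T}. \<forall>p\<in>P. (\<forall>p'\<in>P. g p' t \<ge> 0) \<and> g p t = 0 \<longrightarrow> g' p t > 0"
  shows "\<forall>p\<in>P. \<forall>t\<in>{t0..T}. g p t > 0"
proof (rule ccontr)
  assume neg: "\<not> ?thesis"
  define S where "S = {t\<in>{t0..T}. \<exists>p\<in>P. g p t \<le> 0}"
  have Sne: "S \<noteq> {}" using neg unfolding S_def by force
  have "S = (\<Union>p\<in>P. {t0..T} \<inter> g p -` {..0})" unfolding S_def by auto
  moreover have "closed ({t0..T} \<inter> g p -` {..0})" if "p \<in> P" for p
    using cont that by (intro continuous_closed_preimage) auto
  ultimately have Scl: "closed S" using fin by (metis (no_types, lifting) closed_UN)
  have Sbd: "bdd_below S" unfolding S_def by (rule bdd_belowI[of _ t0]) auto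
  define t1 where "t1 = Inf S"
  have t1S: "t1 \<in> S" unfolding t1_def using closed_contains_Inf[OF Sne Sbd Scl] .
  then obtain p where p: "p \<in> P" "g p t1 \<le> 0" and t1r: "t0 \<le> t1" "t1 \<le> T" unfolding S_def by auto
  have t01: "t0 \<noteq> t1" using p init by auto
  with t1r have lt: "t0 < t1" by simp
  have before: "\<forall>t\<in>{t0..<t1}. \<forall>q\<in>P. g q t > 0"
  proof (intro ballI)
    fix t q assume t: "t \<in> {t0..<t1}" and q: "q \<in> P"
    have "t \<notin> S"
    proof
      assume "t \<in> S"
      then have "t1 \<le> t" unfolding t1_def using Sbd by (rule cInf_lower)
      with t show False by auto
    qed
    then show "g q t > 0" using t t1r q unfolding S_def by auto
  qed
  have allnn: "\<forall>q\<in>P. g q t1 \<ge> 0"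
    using cleft cont lt t1r before by blast
  then have gp0: "g p t1 = 0" using p by force
  have "g' p t1 > 0" using key lt t1r p allnn gp0 by auto
  moreover have "g' p t1 \<le> 0"
    using dleft[of "g p" "g' p t1" t1 t0 T] der p lt t1r gp0 before by auto
  ultimately show False by simp
qed


lemma rowsum_le:
  fixes M :: "real ^ 'n ^ 'n"
  assumes "\<forall>i j. M $ i $ j \<ge> 0"
  shows "(\<Sum>j\<in>UNIV. M $ i $ j) \<le> (\<Sum>i\<in>UNIV. \<Sum>j\<in>UNIV. M $ i $ j)"
  by (rule member_le_sum) (use assms in \<open>auto intro: sum_nonneg\<close>)

lemma entry_le_rowsum:
  fixes M :: "real ^ 'n ^ 'n"
  assumes "\<forall>i j. M $ i $ j \<ge> 0"
  shows "M $ i $ j \<le> (\<Sum>j\<in>UNIV. M $ i $ j)"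
  by (rule member_le_sum) (use assms in auto)

lemma vsum_le:
  fixes w :: "real ^ 'n"
  assumes "\<forall>i. w $ i \<ge> 0"
  shows "w $ i \<le> (\<Sum>i\<in>UNIV. w $ i)"
  by (rule member_le_sum) (use assms in auto)

lemma mv_lb:
  fixes M :: "real ^ 'n ^ 'n"
  assumes "\<forall>i j. M $ i $ j \<ge> 0" "\<forall>j. W $ j \<ge> l"
  shows "(M *v W) $ i \<ge> (\<Sum>j\<in>UNIV. M $ i $ j) * l"
proof -
  have "(\<Sum>j\<in>UNIV. M $ i $ j) * l = (\<Sum>j\<in>UNIV. M $ i $ j * l)" by (simp add: sum_distrib_right)
  also have "\<dots> \<le> (\<Sum>j\<in>UNIV. M $ i $ j * W $ j)"
    by (rule sum_mono) (use assms in \<open>auto intro: mult_left_mono\<close>)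
  finally show ?thesis by (simp add: mv_comp)
qed

lemma mv_ub:
  fixes M :: "real ^ 'n ^ 'n"
  assumes "\<forall>i j. M $ i $ j \<ge> 0" "\<forall>j. W $ j \<le> u"
  shows "(M *v W) $ i \<le> (\<Sum>j\<in>UNIV. M $ i $ j) * u"
proof -
  have "(\<Sum>j\<in>UNIV. M $ i $ j * W $ j) \<le> (\<Sum>j\<in>UNIV. M $ i $ j * u)"
    by (rule sum_mono) (use assms in \<open>auto intro: mult_left_mono\<close>)
  also have "\<dots> = (\<Sum>j\<in>UNIV. M $ i $ j) * u" by (simp add: sum_distrib_right)
  finally show ?thesis by (simp add: mv_comp)
qed

definition SM :: "real ^ 'n ^ 'n \<Rightarrow> real" where
  "SM M = (\<Sum>i\<in>UNIV. \<Sum>j\<in>UNIV. M $ i $ j)"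

definition SV :: "real ^ 'n \<Rightarrow> real" where
  "SV w = (\<Sum>i\<in>UNIV. w $ i)"

definition Kc where
  "Kc A B Hmin DH \<gamma> \<omega> \<delta> = 2 * SM A + 8 * SM B + 64 * SM DH + 16 * SM Hmin + SV \<gamma> + SV \<omega> + SV \<delta>"

lemma SM_nonneg: "\<forall>i j. M $ i $ j \<ge> (0::real) \<Longrightarrow> SM M \<ge> 0"
  unfolding SM_def by (auto intro!: sum_nonneg)

lemma SV_nonneg: "\<forall>i. w $ i \<ge> (0::real) \<Longrightarrow> SV w \<ge> 0"
  unfolding SV_def by (auto intro!: sum_nonneg)

lemma Bx_bounds:
  fixes B :: "real ^ 'n ^ 'n"
  assumes nB: "\<forall>i j. B $ i $ j \<ge> 0" and d: "0 \<le> d" "d \<le> 1"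
    and lo: "\<forall>j. Xv $ j \<ge> - d" and hi: "\<forall>j. Xv $ j \<le> 4"
  shows "(B *v Xv) $ i \<ge> - SM B * d" "\<bar>(B *v Xv) $ i\<bar> \<le> 4 * SM B"
proof -
  have r: "(\<Sum>j\<in>UNIV. B $ i $ j) \<le> SM B" "(\<Sum>j\<in>UNIV. B $ i $ j) \<ge> 0"
    using rowsum_le[OF nB] nB unfolding SM_def by (auto intro: sum_nonneg)
  have l: "(B *v Xv) $ i \<ge> (\<Sum>j\<in>UNIV. B $ i $ j) * (- d)" using mv_lb[OF nB lo] .
  have u: "(B *v Xv) $ i \<le> (\<Sum>j\<in>UNIV. B $ i $ j) * 4" using mv_ub[OF nB hi] .
  have "(\<Sum>j\<in>UNIV. B $ i $ j) * d \<le> SM B * d" using r d by (intro mult_right_mono) auto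
  then show "(B *v Xv) $ i \<ge> - SM B * d" using l by simp
  have "(\<Sum>j\<in>UNIV. B $ i $ j) * d \<le> (\<Sum>j\<in>UNIV. B $ i $ j)" using r d
    by (simp add: mult_left_le)
  then show "\<bar>(B *v Xv) $ i\<bar> \<le> 4 * SM B" using l u r by (simp add: abs_le_iff)
qed

lemma Hv_bounds:
  fixes DH Hmin :: "real ^ 'n ^ 'n"
  assumes nD: "\<forall>i j. DH $ i $ j \<ge> 0" and nH: "\<forall>i j. Hmin $ i $ j \<ge> 0"
    and d: "0 \<le> d" "d \<le> 1"
    and olo: "Ov $ i \<ge> - d" and ohi: "Ov $ i \<le> 2"
    and lo: "\<forall>j. Vv $ j \<ge> - d" and hi: "\<forall>j. Vv $ j \<le> 4"
  shows "(Hmat Hmin DH Ov *v Vv) $ i \<ge> - (6 * SM DH + SM Hmin) * d"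
        "\<bar>(Hmat Hmin DH Ov *v Vv) $ i\<bar> \<le> 8 * SM DH + 4 * SM Hmin"
proof -
  have eq: "(Hmat Hmin DH Ov *v Vv) $ i = (\<Sum>j\<in>UNIV. Vv $ j * (Ov $ i * DH $ i $ j + Hmin $ i $ j))"
    by (simp add: mv_comp Hmat_comp mult.commute)
  have trm: "Vv $ j * (Ov $ i * DH $ i $ j + Hmin $ i $ j) \<ge> - (4 * DH $ i $ j + (2 * DH $ i $ j + Hmin $ i $ j) * 1) * d
     \<and> \<bar>Vv $ j * (Ov $ i * DH $ i $ j + Hmin $ i $ j)\<bar> \<le> 4 * (2 * DH $ i $ j + Hmin $ i $ j)" for j
  proof -
    have D0: "DH $ i $ j \<ge> 0" "Hmin $ i $ j \<ge> 0" using nD nH by auto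
    have c1: "Ov $ i * DH $ i $ j \<ge> - d * DH $ i $ j" using olo D0 by (intro mult_right_mono) auto
    have c2: "Ov $ i * DH $ i $ j \<le> 2 * DH $ i $ j" using ohi D0 by (intro mult_right_mono) auto
    have c3: "d * DH $ i $ j \<le> DH $ i $ j" using d D0 by (simp add: mult_left_le_one_le)
    have cl: "Ov $ i * DH $ i $ j + Hmin $ i $ j \<ge> - DH $ i $ j * d" using c1 D0 by (simp add: mult.commute)
    have ca: "\<bar>Ov $ i * DH $ i $ j + Hmin $ i $ j\<bar> \<le> 2 * DH $ i $ j + Hmin $ i $ j"
      using c1 c2 c3 D0 by (simp add: abs_le_iff)
    have va: "\<bar>Vv $ j\<bar> \<le> 4" using lo[rule_format, of j] hi[rule_format, of j] d by (simp add: abs_le_iff)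
    have vl: "Vv $ j \<ge> - 1 * d" using lo by simp
    have "Vv $ j * (Ov $ i * DH $ i $ j + Hmin $ i $ j) \<ge> - (4 * DH $ i $ j + (2 * DH $ i $ j + Hmin $ i $ j) * 1) * d"
      using prod_lb[OF vl cl va ca _ D0(1) d(1)] by simp
    moreover have "\<bar>Vv $ j * (Ov $ i * DH $ i $ j + Hmin $ i $ j)\<bar> \<le> 4 * (2 * DH $ i $ j + Hmin $ i $ j)"
      unfolding abs_mult using va ca by (intro mult_mono) auto
    ultimately show ?thesis by simp
  qed
  have rD: "(\<Sum>j\<in>UNIV. DH $ i $ j) \<le> SM DH" "(\<Sum>j\<in>UNIV. Hmin $ i $ j) \<le> SM Hmin"
    using rowsum_le[OF nD] rowsum_le[OF nH] unfolding SM_def by auto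
  have "(\<Sum>j\<in>UNIV. Vv $ j * (Ov $ i * DH $ i $ j + Hmin $ i $ j)) \<ge>
        (\<Sum>j\<in>UNIV. - (6 * DH $ i $ j + Hmin $ i $ j) * d)"
    by (rule sum_mono) (use trm in \<open>simp add: algebra_simps\<close>)
  also have "(\<Sum>j\<in>UNIV. - (6 * DH $ i $ j + Hmin $ i $ j) * d) =
     - (6 * (\<Sum>j\<in>UNIV. DH $ i $ j) + (\<Sum>j\<in>UNIV. Hmin $ i $ j)) * d"
    by (simp add: sum_distrib_right[symmetric] sum_distrib_left[symmetric] sum.distrib sum_subtractf sum_negf)
  also have "\<dots> \<ge> - (6 * SM DH + SM Hmin) * d"
    using rD d by (intro mult_right_mono) auto
  finally show "(Hmat Hmin DH Ov *v Vv) $ i \<ge> - (6 * SM DH + SM Hmin) * d" using eq by simp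
  have "\<bar>\<Sum>j\<in>UNIV. Vv $ j * (Ov $ i * DH $ i $ j + Hmin $ i $ j)\<bar> \<le>
        (\<Sum>j\<in>UNIV. \<bar>Vv $ j * (Ov $ i * DH $ i $ j + Hmin $ i $ j)\<bar>)" by (rule sum_abs)
  also have "\<dots> \<le> (\<Sum>j\<in>UNIV. 4 * (2 * DH $ i $ j + Hmin $ i $ j))"
    by (rule sum_mono) (use trm in simp)
  also have "\<dots> = 8 * (\<Sum>j\<in>UNIV. DH $ i $ j) + 4 * (\<Sum>j\<in>UNIV. Hmin $ i $ j)"
    by (simp add: sum_distrib_left sum.distrib)
  also have "\<dots> \<le> 8 * SM DH + 4 * SM Hmin" using rD by simp
  finally show "\<bar>(Hmat Hmin DH Ov *v Vv) $ i\<bar> \<le> 8 * SM DH + 4 * SM Hmin" using eq by simp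
qed


lemma state_bounds:
  fixes A B Hmin DH :: "real ^ 'n ^ 'n" and \<gamma> \<omega> \<delta> Ov Sv Xv Rv Vv :: "real ^ 'n"
  assumes nA: "\<forall>i j. A $ i $ j \<ge> 0" and nB: "\<forall>i j. B $ i $ j \<ge> 0"
    and nH: "\<forall>i j. Hmin $ i $ j \<ge> 0" and nD: "\<forall>i j. DH $ i $ j \<ge> 0"
    and ng: "\<forall>i. \<gamma> $ i \<ge> 0" and nw: "\<forall>i. \<omega> $ i \<ge> 0" and nd: "\<forall>i. \<delta> $ i \<ge> 0"
    and d: "0 < d" "d \<le> 1"
    and lo: "\<forall>j. Ov $ j \<ge> - d \<and> 1 - Ov $ j \<ge> - d \<and> Sv $ j \<ge> - d \<and> Xv $ j \<ge> - d
               \<and> Rv $ j \<ge> - d \<and> Vv $ j \<ge> - d"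
    and sm: "\<forall>j. Sv $ j + Xv $ j + Rv $ j + Vv $ j = 1"
  shows "Ov $ i = - d \<Longrightarrow> f_o A Ov Xv $ i \<ge> - Kc A B Hmin DH \<gamma> \<omega> \<delta> * d"
    and "1 - Ov $ i = - d \<Longrightarrow> - f_o A Ov Xv $ i \<ge> - Kc A B Hmin DH \<gamma> \<omega> \<delta> * d"
    and "Sv $ i = - d \<Longrightarrow> f_s B \<delta> \<omega> Hmin DH Ov Sv Xv Rv Vv $ i \<ge> - Kc A B Hmin DH \<gamma> \<omega> \<delta> * d"
    and "Xv $ i = - d \<Longrightarrow> f_x B \<gamma> Sv Xv $ i \<ge> - Kc A B Hmin DH \<gamma> \<omega> \<delta> * d"
    and "Rv $ i = - d \<Longrightarrow> f_r \<gamma> \<omega> Hmin DH Ov Xv Rv Vv $ i \<ge> - Kc A B Hmin DH \<gamma> \<omega> \<delta> * d"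
    and "Vv $ i = - d \<Longrightarrow> f_v \<delta> Hmin DH Ov Sv Rv Vv $ i \<ge> - Kc A B Hmin DH \<gamma> \<omega> \<delta> * d"
proof -
  define K where "K = Kc A B Hmin DH \<gamma> \<omega> \<delta>"
  have S0: "SM A \<ge> 0" "SM B \<ge> 0" "SM Hmin \<ge> 0" "SM DH \<ge> 0" "SV \<gamma> \<ge> 0" "SV \<omega> \<ge> 0" "SV \<delta> \<ge> 0"
    using SM_nonneg[OF nA] SM_nonneg[OF nB] SM_nonneg[OF nH] SM_nonneg[OF nD]
      SV_nonneg[OF ng] SV_nonneg[OF nw] SV_nonneg[OF nd] by auto
  have K: "K = 2 * SM A + 8 * SM B + 64 * SM DH + 16 * SM Hmin + SV \<gamma> + SV \<omega> + SV \<delta>"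
    unfolding K_def Kc_def ..
  have lj: "Ov $ j \<ge> - d" "1 - Ov $ j \<ge> - d" "Sv $ j \<ge> - d" "Xv $ j \<ge> - d"
    "Rv $ j \<ge> - d" "Vv $ j \<ge> - d" "Sv $ j + Xv $ j + Rv $ j + Vv $ j = 1" for j
    using lo sm by auto
  have Ohi0: "Ov $ j \<le> 2" for j using lj(2)[of j] d by linarith
  then have Ohi: "\<forall>j. Ov $ j \<le> 2" by blast
  have Shi: "\<forall>j. Sv $ j \<le> 4" "\<forall>j. Xv $ j \<le> 4" "\<forall>j. Rv $ j \<le> 4" "\<forall>j. Vv $ j \<le> 4"
    and Xhi: "\<forall>j. Xv $ j \<le> 1 + 3 * d"
  proof -
    have "Sv $ j \<le> 4 \<and> Xv $ j \<le> 4 \<and> Rv $ j \<le> 4 \<and> Vv $ j \<le> 4 \<and> Xv $ j \<le> 1 + 3 * d" for j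
      using lj[of j] d by linarith
    then show "\<forall>j. Sv $ j \<le> 4" "\<forall>j. Xv $ j \<le> 4" "\<forall>j. Rv $ j \<le> 4" "\<forall>j. Vv $ j \<le> 4"
      "\<forall>j. Xv $ j \<le> 1 + 3 * d" by auto
  qed
  have lo': "\<forall>j. Ov $ j \<ge> - d" "\<forall>j. Sv $ j \<ge> - d" "\<forall>j. Xv $ j \<ge> - d" "\<forall>j. Rv $ j \<ge> - d"
     "\<forall>j. Vv $ j \<ge> - d" "\<forall>j. Ov $ j \<le> 1 + d" using lj by (auto simp: algebra_simps)
  have Bx: "(B *v Xv) $ i \<ge> - SM B * d" "\<bar>(B *v Xv) $ i\<bar> \<le> 4 * SM B"
    using Bx_bounds[OF nB _ d(2) lo'(3) Shi(2)] d by auto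
  have Hv: "(Hmat Hmin DH Ov *v Vv) $ i \<ge> - (6 * SM DH + SM Hmin) * d"
        "\<bar>(Hmat Hmin DH Ov *v Vv) $ i\<bar> \<le> 8 * SM DH + 4 * SM Hmin"
    using Hv_bounds[OF nD nH _ d(2) _ _ lo'(5) Shi(4), of Ov i] d lo' Ohi by auto
  have ki: "(\<Sum>j\<in>UNIV. A $ i $ j) \<le> SM A" "(\<Sum>j\<in>UNIV. A $ i $ j) \<ge> 0"
    using rowsum_le[OF nA] nA unfolding SM_def by (auto intro: sum_nonneg)
  have par: "\<gamma> $ i \<le> SV \<gamma>" "\<omega> $ i \<le> SV \<omega>" "\<delta> $ i \<le> SV \<delta>"
    using vsum_le[OF ng] vsum_le[OF nw] vsum_le[OF nd] unfolding SV_def by auto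
  have pnn: "\<gamma> $ i \<ge> 0" "\<omega> $ i \<ge> 0" "\<delta> $ i \<ge> 0" using ng nw nd by auto
  have Kd: "K * d \<ge> 0" using S0 K d by simp
  let ?k = "\<Sum>j\<in>UNIV. A $ i $ j"
  show "Ov $ i = - d \<Longrightarrow> f_o A Ov Xv $ i \<ge> - Kc A B Hmin DH \<gamma> \<omega> \<delta> * d"
  proof -
    assume Oi: "Ov $ i = - d"
    have "(A *v Xv) $ i \<ge> ?k * (- d)" using mv_lb[OF nA lo'(3)] .
    moreover have "(A *v Ov) $ i \<ge> ?k * (- d)" using mv_lb[OF nA lo'(1)] .
    ultimately have "f_o A Ov Xv $ i \<ge> 0" using Oi by (simp add: fo_comp)
    then show ?thesis using Kd K_def by simp
  qed
  show "1 - Ov $ i = - d \<Longrightarrow> - f_o A Ov Xv $ i \<ge> - Kc A B Hmin DH \<gamma> \<omega> \<delta> * d"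
  proof -
    assume Oi: "1 - Ov $ i = - d"
    have a: "(A *v Xv) $ i \<le> ?k * (1 + 3 * d)" using mv_ub[OF nA Xhi] .
    have b: "(A *v Ov) $ i \<le> ?k * (1 + d)" using mv_ub[OF nA lo'(6)] .
    have "?k * d \<le> SM A * d" using ki d by (intro mult_right_mono) auto
    moreover have Oi': "Ov $ i = 1 + d" using Oi by simp
    ultimately have "- f_o A Ov Xv $ i \<ge> - 2 * SM A * d" using a b
      by (simp add: fo_comp algebra_simps)
    moreover have "2 * SM A * d \<le> K * d" using S0 K d by (intro mult_right_mono) auto
    ultimately show ?thesis using K_def by simp
  qed
  show "Sv $ i = - d \<Longrightarrow> f_s B \<delta> \<omega> Hmin DH Ov Sv Xv Rv Vv $ i \<ge> - Kc A B Hmin DH \<gamma> \<omega> \<delta> * d"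
  proof -
    assume Si: "Sv $ i = - d"
    have e: "f_s B \<delta> \<omega> Hmin DH Ov Sv Xv Rv Vv $ i = \<delta> $ i * Vv $ i + d * (B *v Xv) $ i
       + d * (Hmat Hmin DH Ov *v Vv) $ i + \<omega> $ i * Rv $ i"
      using Si by (simp add: fs_comp algebra_simps)
    have t1: "\<delta> $ i * Vv $ i \<ge> - (SV \<delta> * d)"
    proof -
      have "\<delta> $ i * Vv $ i \<ge> \<delta> $ i * (- d)" using pnn lo' by (intro mult_left_mono) auto
      moreover have "\<delta> $ i * d \<le> SV \<delta> * d" using par d by (intro mult_right_mono) auto
      ultimately show ?thesis by simp
    qed
    have t4: "\<omega> $ i * Rv $ i \<ge> - (SV \<omega> * d)"
    proof -
      have "\<omega> $ i * Rv $ i \<ge> \<omega> $ i * (- d)" using pnn lo' by (intro mult_left_mono) auto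
      moreover have "\<omega> $ i * d \<le> SV \<omega> * d" using par d by (intro mult_right_mono) auto
      ultimately show ?thesis by simp
    qed
    have t2: "d * (B *v Xv) $ i \<ge> d * (- (4 * SM B))" using Bx d by (intro mult_left_mono) auto
    have t3: "d * (Hmat Hmin DH Ov *v Vv) $ i \<ge> d * (- (8 * SM DH + 4 * SM Hmin))"
      using Hv d by (intro mult_left_mono) auto
    have "K * d \<ge> (SV \<delta> + 4 * SM B + (8 * SM DH + 4 * SM Hmin) + SV \<omega>) * d"
      using S0 K d by (intro mult_right_mono) auto
    then show ?thesis using e t1 t2 t3 t4 K_def by (simp add: algebra_simps)
  qed
  show "Xv $ i = - d \<Longrightarrow> f_x B \<gamma> Sv Xv $ i \<ge> - Kc A B Hmin DH \<gamma> \<omega> \<delta> * d"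
  proof -
    assume Xi: "Xv $ i = - d"
    have sa1: "Sv $ i \<ge> - 1 * d" using lj(3)[of i] by simp
    have sa2: "\<bar>Sv $ i\<bar> \<le> 4" using lj(3)[of i] Shi(1) d by (simp add: abs_le_iff)
    have pl: "Sv $ i * (B *v Xv) $ i \<ge> - (4 * SM B + 4 * SM B * 1) * d"
      using prod_lb[OF sa1 Bx(1) sa2 Bx(2) _ S0(2) less_imp_le[OF d(1)]] by simp
    have g0: "\<gamma> $ i * d \<ge> 0" using pnn d by simp
    have kk: "K * d \<ge> 8 * SM B * d" using S0 K d by (intro mult_right_mono) auto
    have "f_x B \<gamma> Sv Xv $ i = Sv $ i * (B *v Xv) $ i + \<gamma> $ i * d" using Xi by (simp add: fx_comp)
    moreover have "- (4 * SM B + 4 * SM B * 1) * d = - (8 * SM B * d)" by (simp add: algebra_simps)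
    ultimately have "f_x B \<gamma> Sv Xv $ i \<ge> - (K * d)" using pl g0 kk by linarith
    then show ?thesis using K_def by simp
  qed
  show "Rv $ i = - d \<Longrightarrow> f_r \<gamma> \<omega> Hmin DH Ov Xv Rv Vv $ i \<ge> - Kc A B Hmin DH \<gamma> \<omega> \<delta> * d"
  proof -
    assume Ri: "Rv $ i = - d"
    have t1: "\<gamma> $ i * Xv $ i \<ge> - (SV \<gamma> * d)"
    proof -
      have "\<gamma> $ i * Xv $ i \<ge> \<gamma> $ i * (- d)" using pnn lo' by (intro mult_left_mono) auto
      moreover have "\<gamma> $ i * d \<le> SV \<gamma> * d" using par d by (intro mult_right_mono) auto
      ultimately show ?thesis by simp
    qed
    have t3: "d * (Hmat Hmin DH Ov *v Vv) $ i \<ge> d * (- (8 * SM DH + 4 * SM Hmin))"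
      using Hv d by (intro mult_left_mono) auto
    have "\<omega> $ i * d \<ge> 0" using pnn d by simp
    moreover have "K * d \<ge> (SV \<gamma> + (8 * SM DH + 4 * SM Hmin)) * d"
      using S0 K d by (intro mult_right_mono) auto
    ultimately show ?thesis using Ri t1 t3 K_def by (simp add: fr_comp algebra_simps)
  qed
  show "Vv $ i = - d \<Longrightarrow> f_v \<delta> Hmin DH Ov Sv Rv Vv $ i \<ge> - Kc A B Hmin DH \<gamma> \<omega> \<delta> * d"
  proof -
    assume Vi: "Vv $ i = - d"
    have sa: "Sv $ i + Rv $ i \<ge> - 2 * d" "\<bar>Sv $ i + Rv $ i\<bar> \<le> 8" using lj[of i] Shi d
      by (auto simp: abs_le_iff)
    have "(Sv $ i + Rv $ i) * (Hmat Hmin DH Ov *v Vv) $ i \<ge>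
        - (8 * (6 * SM DH + SM Hmin) + (8 * SM DH + 4 * SM Hmin) * 2) * d"
      using prod_lb[OF sa(1) Hv(1) sa(2) Hv(2)] S0 d by simp
    moreover have "\<delta> $ i * d \<ge> 0" using pnn d by simp
    moreover have "K * d \<ge> (8 * (6 * SM DH + SM Hmin) + (8 * SM DH + 4 * SM Hmin) * 2) * d"
      using S0 K d by (intro mult_right_mono) auto
    ultimately show ?thesis using Vi K_def by (simp add: fv_comp algebra_simps)
  qed
qed


lemma ring_zero:
  fixes dv s b h wr g xx rr :: real
  shows "(dv - s * (b + h) + wr) + (s * b - g * xx) + (g * xx - wr - rr * h) + ((s + rr) * h - dv) = 0"
  by (simp add: algebra_simps)

lemma sum_zero:
  "f_s B \<delta> \<omega> Hmin DH Ov Sv Xv Rv Vv $ j + f_x B \<gamma> Sv Xv $ j + f_r \<gamma> \<omega> Hmin DH Ov Xv Rv Vv $ j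
     + f_v \<delta> Hmin DH Ov Sv Rv Vv $ j = 0"
  unfolding fs_comp fx_comp fr_comp fv_comp by (rule ring_zero)

theorem lemma2:
  fixes A B Hmin DH :: "real ^ 'n ^ 'n"
    and \<gamma> \<omega> \<delta> :: "real ^ 'n"
    and o' s x r v :: "real \<Rightarrow> real ^ 'n"
    and t0 :: real
  assumes nonneg_A: "\<forall>i j. A $ i $ j \<ge> 0"
    and nonneg_B: "\<forall>i j. B $ i $ j \<ge> 0"
    and nonneg_Hmin: "\<forall>i j. Hmin $ i $ j \<ge> 0"
    and nonneg_DH: "\<forall>i j. DH $ i $ j \<ge> 0"
    and nonneg_gamma: "\<forall>i. \<gamma> $ i \<ge> 0"
    and nonneg_omega: "\<forall>i. \<omega> $ i \<ge> 0"
    and nonneg_delta: "\<forall>i. \<delta> $ i \<ge> 0"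
    and ode_o: "\<forall>t\<ge>t0. (o' has_vector_derivative f_o A (o' t) (x t)) (at t within {t0..})"
    and ode_s: "\<forall>t\<ge>t0. (s has_vector_derivative
                   f_s B \<delta> \<omega> Hmin DH (o' t) (s t) (x t) (r t) (v t)) (at t within {t0..})"
    and ode_x: "\<forall>t\<ge>t0. (x has_vector_derivative f_x B \<gamma> (s t) (x t)) (at t within {t0..})"
    and ode_r: "\<forall>t\<ge>t0. (r has_vector_derivative
                   f_r \<gamma> \<omega> Hmin DH (o' t) (x t) (r t) (v t)) (at t within {t0..})"
    and ode_v: "\<forall>t\<ge>t0. (v has_vector_derivative
                   f_v \<delta> Hmin DH (o' t) (s t) (r t) (v t)) (at t within {t0..})"
    and init_box: "\<forall>i. 0 \<le> o' t0 $ i \<and> o' t0 $ i \<le> 1 \<and> 0 \<le> s t0 $ i \<and> s t0 $ i \<le> 1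
                     \<and> 0 \<le> x t0 $ i \<and> x t0 $ i \<le> 1 \<and> 0 \<le> r t0 $ i \<and> r t0 $ i \<le> 1
                     \<and> 0 \<le> v t0 $ i \<and> v t0 $ i \<le> 1"
    and init_sum: "\<forall>i. s t0 $ i + x t0 $ i + r t0 $ i + v t0 $ i = 1"
    and init_o: "\<forall>i. o' t0 $ i \<in> {0..1}"
  shows "\<forall>i. \<forall>t>t0. o' t $ i \<in> {0..1}"
proof (intro allI impI)
  fix i :: 'n and T :: real
  assume T: "t0 < T"
  define K where "K = Kc A B Hmin DH \<gamma> \<omega> \<delta>"
  define L where "L = K + 1"
  have K0: "K \<ge> 0"
    using SM_nonneg[OF nonneg_A] SM_nonneg[OF nonneg_B] SM_nonneg[OF nonneg_Hmin] SM_nonneg[OF nonneg_DH]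
      SV_nonneg[OF nonneg_gamma] SV_nonneg[OF nonneg_omega] SV_nonneg[OF nonneg_delta]
    unfolding K_def Kc_def by simp
  let ?I = "{t0..}"
  have dO: "((\<lambda>t. o' t $ j) has_real_derivative f_o A (o' t) (x t) $ j) (at t within ?I)"
    if "t \<ge> t0" for j t using comp_deriv[OF ode_o[rule_format, OF that]] .
  have dS: "((\<lambda>t. s t $ j) has_real_derivative f_s B \<delta> \<omega> Hmin DH (o' t) (s t) (x t) (r t) (v t) $ j) (at t within ?I)"
    if "t \<ge> t0" for j t using comp_deriv[OF ode_s[rule_format, OF that]] .
  have dX: "((\<lambda>t. x t $ j) has_real_derivative f_x B \<gamma> (s t) (x t) $ j) (at t within ?I)"
    if "t \<ge> t0" for j t using comp_deriv[OF ode_x[rule_format, OF that]] .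
  have dR: "((\<lambda>t. r t $ j) has_real_derivative f_r \<gamma> \<omega> Hmin DH (o' t) (x t) (r t) (v t) $ j) (at t within ?I)"
    if "t \<ge> t0" for j t using comp_deriv[OF ode_r[rule_format, OF that]] .
  have dV: "((\<lambda>t. v t $ j) has_real_derivative f_v \<delta> Hmin DH (o' t) (s t) (r t) (v t) $ j) (at t within ?I)"
    if "t \<ge> t0" for j t using comp_deriv[OF ode_v[rule_format, OF that]] .
  have sumc: "s t $ j + x t $ j + r t $ j + v t $ j = 1" if "t \<ge> t0" for j t
  proof -
    have "((\<lambda>t. s t $ j + x t $ j + r t $ j + v t $ j) has_real_derivative 0) (at t within ?I)"
      if "t \<in> ?I" for t
    proof -
      have t: "t \<ge> t0" using that by simp
      have "((\<lambda>t. s t $ j + x t $ j + r t $ j + v t $ j) has_real_derivative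
         f_s B \<delta> \<omega> Hmin DH (o' t) (s t) (x t) (r t) (v t) $ j + f_x B \<gamma> (s t) (x t) $ j
         + f_r \<gamma> \<omega> Hmin DH (o' t) (x t) (r t) (v t) $ j + f_v \<delta> Hmin DH (o' t) (s t) (r t) (v t) $ j)
         (at t within ?I)"
        by (rule DERIV_add[OF DERIV_add[OF DERIV_add[OF dS[OF t] dX[OF t]] dR[OF t]] dV[OF t]])
      then show ?thesis unfolding sum_zero .
    qed
    then obtain c where c: "\<forall>t\<in>?I. s t $ j + x t $ j + r t $ j + v t $ j = c"
      using has_field_derivative_zero_constant[of ?I "\<lambda>t. s t $ j + x t $ j + r t $ j + v t $ j"]
      by (auto simp: convex_real_interval)
    have "c = 1" using c init_sum by force
    then show ?thesis using c that by simp
  qed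
  define Q :: "'n \<times> nat \<Rightarrow> real \<Rightarrow> real" where
    "Q p t = (if snd p = 0 then o' t $ fst p else if snd p = 1 then 1 - o' t $ fst p
       else if snd p = 2 then s t $ fst p else if snd p = 3 then x t $ fst p
       else if snd p = 4 then r t $ fst p else v t $ fst p)" for p t
  define Q' :: "'n \<times> nat \<Rightarrow> real \<Rightarrow> real" where
    "Q' p t = (if snd p = 0 then f_o A (o' t) (x t) $ fst p else if snd p = 1 then - f_o A (o' t) (x t) $ fst p
       else if snd p = 2 then f_s B \<delta> \<omega> Hmin DH (o' t) (s t) (x t) (r t) (v t) $ fst p
       else if snd p = 3 then f_x B \<gamma> (s t) (x t) $ fst p
       else if snd p = 4 then f_r \<gamma> \<omega> Hmin DH (o' t) (x t) (r t) (v t) $ fst p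
       else f_v \<delta> Hmin DH (o' t) (s t) (r t) (v t) $ fst p)" for p t
  have dQ: "(Q p has_real_derivative Q' p t) (at t within ?I)" if "t \<ge> t0" for p t
  proof -
    obtain j k where p: "p = (j, k)" by force
    consider "k = 0" | "k = 1" | "k = 2" | "k = 3" | "k = 4" | "k \<ge> 5" by linarith
    then show ?thesis
    proof cases
      case 1
      have "Q p = (\<lambda>t. o' t $ j)" using 1 p by (auto simp: Q_def)
      then show ?thesis using dO[OF that, of j] 1 p by (simp add: Q'_def)
    next
      case 2
      have "Q p = (\<lambda>t. 1 - o' t $ j)" using 2 p by (auto simp: Q_def)
      moreover have "((\<lambda>t. 1 - o' t $ j) has_real_derivative 0 - f_o A (o' t) (x t) $ j) (at t within ?I)"
        by (intro DERIV_diff DERIV_const dO[OF that])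
      ultimately show ?thesis using 2 p by (simp add: Q'_def)
    next
      case 3
      have "Q p = (\<lambda>t. s t $ j)" using 3 p by (auto simp: Q_def)
      then show ?thesis using dS[OF that, of j] 3 p by (simp add: Q'_def)
    next
      case 4
      have "Q p = (\<lambda>t. x t $ j)" using 4 p by (auto simp: Q_def)
      then show ?thesis using dX[OF that, of j] 4 p by (simp add: Q'_def)
    next
      case 5
      have "Q p = (\<lambda>t. r t $ j)" using 5 p by (auto simp: Q_def)
      then show ?thesis using dR[OF that, of j] 5 p by (simp add: Q'_def)
    next
      case 6
      have "Q p = (\<lambda>t. v t $ j)" using 6 p by (auto simp: Q_def)
      then show ?thesis using dV[OF that, of j] 6 p by (simp add: Q'_def)
    qed
  qed
  have Q0: "Q p t0 \<ge> 0" for p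
    using init_box[rule_format, of "fst p"] unfolding Q_def by simp
  define P where "P = (UNIV :: 'n set) \<times> {0..5::nat}"
  have finP: "finite P" unfolding P_def by simp
  have pos: "\<forall>p\<in>P. \<forall>t\<in>{t0..T}. Q p t + \<eta> * exp (L * (t - T)) > 0" if eta: "0 < \<eta>" "\<eta> \<le> 1" for \<eta>
  proof (rule barrier[OF finP, where g' = "\<lambda>p t. Q' p t + \<eta> * (exp (L * (t - T)) * L)"])
    have dg: "((\<lambda>t. Q p t + \<eta> * exp (L * (t - T))) has_real_derivative Q' p t + \<eta> * (exp (L * (t - T)) * L))
        (at t within {t0..T})" if "t \<in> {t0..T}" for p t
    proof -
      have "(Q p has_real_derivative Q' p t) (at t within {t0..T})"
        using DERIV_subset[OF dQ[of t p]] that by auto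
      moreover have "((\<lambda>t. \<eta> * exp (L * (t - T))) has_real_derivative \<eta> * (exp (L * (t - T)) * L))
        (at t within {t0..T})"
        by (auto intro!: derivative_eq_intros)
      ultimately show ?thesis by (rule DERIV_add)
    qed
    then show "\<forall>p\<in>P. \<forall>t\<in>{t0..T}. ((\<lambda>t. Q p t + \<eta> * exp (L * (t - T))) has_real_derivative
        Q' p t + \<eta> * (exp (L * (t - T)) * L)) (at t within {t0..T})" by blast
    show "\<forall>p\<in>P. continuous_on {t0..T} (\<lambda>t. Q p t + \<eta> * exp (L * (t - T)))"
      using dg by (meson DERIV_continuous continuous_on_eq_continuous_within)
    show "\<forall>p\<in>P. Q p t0 + \<eta> * exp (L * (t0 - T)) > 0"
      using Q0 eta by (simp add: add_nonneg_pos)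
    show "\<forall>t\<in>{t0<..T}. \<forall>p\<in>P. (\<forall>p'\<in>P. Q p' t + \<eta> * exp (L * (t - T)) \<ge> 0) \<and>
        Q p t + \<eta> * exp (L * (t - T)) = 0 \<longrightarrow> Q' p t + \<eta> * (exp (L * (t - T)) * L) > 0"
    proof (intro ballI impI)
      fix t p
      assume t: "t \<in> {t0<..T}" and p: "p \<in> P"
        and h: "(\<forall>p'\<in>P. Q p' t + \<eta> * exp (L * (t - T)) \<ge> 0) \<and> Q p t + \<eta> * exp (L * (t - T)) = 0"
      define d where "d = \<eta> * exp (L * (t - T))"
      have d0: "0 < d" using eta by (simp add: d_def)
      have "exp (L * (t - T)) \<le> 1" using t K0 by (simp add: L_def mult_nonneg_nonpos)
      then have d1: "d \<le> 1" unfolding d_def using eta by (metis mult_le_one less_imp_le exp_ge_zero)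
      have allQ: "Q (j, k) t \<ge> - d" if "k \<le> 5" for j k
      proof -
        have jk: "(j, k) \<in> P" using that unfolding P_def by simp
        have "Q (j, k) t + \<eta> * exp (L * (t - T)) \<ge> 0" using h jk by blast
        then show ?thesis unfolding d_def by linarith
      qed
      have lo: "\<forall>j. o' t $ j \<ge> - d \<and> 1 - o' t $ j \<ge> - d \<and> s t $ j \<ge> - d \<and> x t $ j \<ge> - d
               \<and> r t $ j \<ge> - d \<and> v t $ j \<ge> - d"
      proof
        fix j
        show "o' t $ j \<ge> - d \<and> 1 - o' t $ j \<ge> - d \<and> s t $ j \<ge> - d \<and> x t $ j \<ge> - d
               \<and> r t $ j \<ge> - d \<and> v t $ j \<ge> - d"
          using allQ[of 0 j] allQ[of 1 j] allQ[of 2 j] allQ[of 3 j] allQ[of 4 j] allQ[of 5 j]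
          by (simp add: Q_def)
      qed
      have sm: "\<forall>j. s t $ j + x t $ j + r t $ j + v t $ j = 1" using sumc t by auto
      note sb = state_bounds[OF nonneg_A nonneg_B nonneg_Hmin nonneg_DH nonneg_gamma nonneg_omega
          nonneg_delta d0 d1 lo sm]
      obtain j k where pj: "p = (j, k)" and k5: "k \<le> 5" using p unfolding P_def by auto
      have Qp: "Q p t = - d" using h unfolding d_def by simp
      have "Q' p t \<ge> - K * d"
      proof -
        consider "k = 0" | "k = 1" | "k = 2" | "k = 3" | "k = 4" | "k = 5" using k5 by linarith
        then show ?thesis
        proof cases
          case 1 then show ?thesis using Qp pj sb(1)[of j] by (simp add: Q_def Q'_def K_def)
        next
          case 2 then show ?thesis using Qp pj sb(2)[of j] by (simp add: Q_def Q'_def K_def)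
        next
          case 3 then show ?thesis using Qp pj sb(3)[of j] by (simp add: Q_def Q'_def K_def)
        next
          case 4 then show ?thesis using Qp pj sb(4)[of j] by (simp add: Q_def Q'_def K_def)
        next
          case 5 then show ?thesis using Qp pj sb(5)[of j] by (simp add: Q_def Q'_def K_def)
        next
          case 6 then show ?thesis using Qp pj sb(6)[of j] by (simp add: Q_def Q'_def K_def)
        qed
      qed
      moreover have "\<eta> * (exp (L * (t - T)) * L) = (K + 1) * d"
        unfolding d_def L_def by (simp add: algebra_simps)
      ultimately show "Q' p t + \<eta> * (exp (L * (t - T)) * L) > 0" using d0
        by (simp add: algebra_simps)
    qed
  qed
  have bnd: "Q (i, k) T \<ge> 0" if "k \<le> 5" for k
  proof (rule ccontr)
    assume neg: "\<not> Q (i, k) T \<ge> 0"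
    define \<eta> where "\<eta> = min 1 (- Q (i, k) T / 2)"
    have e: "0 < \<eta>" "\<eta> \<le> 1" using neg by (auto simp: \<eta>_def)
    have iP: "(i, k) \<in> P" using that unfolding P_def by auto
    have "Q (i, k) T + \<eta> * exp (L * (T - T)) > 0"
      using pos[OF e] iP T by (meson atLeastAtMost_iff less_imp_le order_refl)
    then show False using neg by (auto simp: \<eta>_def)
  qed
  show "o' T $ i \<in> {0..1}" using bnd[of 0] bnd[of 1] by (simp add: Q_def)
qed


end
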